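(* Let $G_1$ and $G_2$ be simple graphs with $|V(G_1)|=n$. Let $\alpha'(G_1)$ be the size of a maximum matching $M$ of $G_1$ and $l=n-2\alpha'(G_1)$ the number of $M$-unsaturated vertices of $G_1$. Then $n\,s(G_2)\le s(G_1\circ G_2)\le n\,s(G_2)+\alpha'(G_1)+l.$
   Context: A matching in a graph is a set of edges no two of which share a vertex; it is maximal if it is not properly contained in another matching, and maximum if it has the largest possible size. A vertex is $M$-unsaturated if no edge of $M$ is incident to it. The saturation number $s(G)$ is the minimum cardinality of a maximal matching of $G$. The corona $G_1\circ G_2$ is obtained by taking one copy of $G_1$ and $|V(G_1)|$ disjoint copies of $G_2$, and joining the $i$-th vertex of $G_1$ by an edge to every vertex of the $i$-th copy of $G_2$. *)

theory Defs
  imports Main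
begin

definition simple_graph :: "'a set \<Rightarrow> 'a set set \<Rightarrow> bool" where
  "simple_graph V E \<longleftrightarrow> finite V \<and>
     (\<forall>e\<in>E. \<exists>u v. u \<noteq> v \<and> u \<in> V \<and> v \<in> V \<and> e = {u, v})"

definition matching :: "'a set set \<Rightarrow> 'a set set \<Rightarrow> bool" where
  "matching E M \<longleftrightarrow> M \<subseteq> E \<and> (\<forall>e1\<in>M. \<forall>e2\<in>M. e1 \<noteq> e2 \<longrightarrow> e1 \<inter> e2 = {})"

definition maximal_matching :: "'a set set \<Rightarrow> 'a set set \<Rightarrow> bool" where
  "maximal_matching E M \<longleftrightarrow> matching E M \<and> (\<nexists>M'. matching E M' \<and> M \<subset> M')"

definition matching_number :: "'a set set \<Rightarrow> nat" where
  "matching_number E = Max (card ` {M. matching E M})"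

definition saturation_number :: "'a set set \<Rightarrow> nat" where
  "saturation_number E = Min (card ` {M. maximal_matching E M})"

text \<open>Corona G1 o G2: vertices Inl v (v in V1) and Inr (v, w) (the copy of w
in the v-th copy of G2).\<close>
definition corona_V :: "'a set \<Rightarrow> 'b set \<Rightarrow> ('a + 'a \<times> 'b) set" where
  "corona_V V1 V2 = Inl ` V1 \<union> (\<lambda>(v, w). Inr (v, w)) ` (V1 \<times> V2)"

definition corona_E :: "'a set \<Rightarrow> 'a set set \<Rightarrow> 'b set \<Rightarrow> 'b set set
    \<Rightarrow> ('a + 'a \<times> 'b) set set" where
  "corona_E V1 E1 V2 E2 =
     ((\<lambda>e. Inl ` e) ` E1)
   \<union> (\<Union>v\<in>V1. (\<lambda>e. (\<lambda>w. Inr (v, w)) ` e) ` E2)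
   \<union> {{Inl v, Inr (v, w)} | v w. v \<in> V1 \<and> w \<in> V2}"

end

theory Submission
  imports Defs
begin

lemma maximal_block:
  assumes "maximal_matching E M" "e \<in> E" "e \<notin> M"
  shows "\<exists>f\<in>M. e \<inter> f \<noteq> {}"
proof (rule ccontr)
  assume "\<not> ?thesis"
  hence d: "\<forall>f\<in>M. e \<inter> f = {}" by blast
  have "matching E (insert e M)" using assms d unfolding maximal_matching_def matching_def
    by (auto simp: Int_commute)
  moreover have "M \<subset> insert e M" using assms(3) by blast
  ultimately show False using assms(1) unfolding maximal_matching_def by blast
qed

lemma block_maximal:
  assumes "matching E M" "\<And>e. e \<in> E \<Longrightarrow> e \<notin> M \<Longrightarrow> \<exists>f\<in>M. e \<inter> f \<noteq> {}"
  shows "maximal_matching E M"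
  unfolding maximal_matching_def
proof (intro conjI assms(1) notI)
  assume "\<exists>M'. matching E M' \<and> M \<subset> M'"
  then obtain M' where m: "matching E M'" "M \<subset> M'" by blast
  then obtain e where e: "e \<in> M'" "e \<notin> M" by blast
  have "e \<in> E" using m(1) e(1) unfolding matching_def by blast
  then obtain f where f: "f \<in> M" "e \<inter> f \<noteq> {}" using assms(2) e(2) by blast
  have "f \<in> M'" "e \<noteq> f" using f m(2) e(2) by auto
  thus False using m(1) e(1) f(2) unfolding matching_def by blast
qed

lemma max_matching_exists:
  assumes "finite E"
  shows "\<exists>M. matching E M \<and> card M = matching_number E \<and> maximal_matching E M"
proof -
  have "{M. matching E M} \<subseteq> Pow E" by (auto simp: matching_def)
  hence fin: "finite {M. matching E M}" using assms by (meson finite_Pow_iff finite_subset)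
  have ne: "matching E {}" by (simp add: matching_def)
  have "matching_number E \<in> card ` {M. matching E M}" unfolding matching_number_def
    using fin ne by (intro Max_in) auto
  then obtain M where M: "matching E M" "card M = matching_number E" by auto
  have "maximal_matching E M" unfolding maximal_matching_def
  proof (intro conjI M(1) notI)
    assume "\<exists>M'. matching E M' \<and> M \<subset> M'"
    then obtain M' where m: "matching E M'" "M \<subset> M'" by blast
    have "finite M'" using m(1) assms unfolding matching_def by (auto intro: finite_subset)
    hence "card M < card M'" using m(2) by (simp add: psubset_card_mono)
    moreover have "card M' \<le> matching_number E" unfolding matching_number_def
      using fin m(1) by (intro Max_ge) auto
    ultimately show False using M(2) by simp
  qed
  thus ?thesis using M by blast
qed

lemma sat_fin:
  assumes "finite E"
  shows "finite {M. maximal_matching E M}" "{M. maximal_matching E M} \<noteq> {}"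
proof -
  have "{M. maximal_matching E M} \<subseteq> Pow E" by (auto simp: maximal_matching_def matching_def)
  thus "finite {M. maximal_matching E M}" using assms by (meson finite_Pow_iff finite_subset)
  show "{M. maximal_matching E M} \<noteq> {}" using max_matching_exists[OF assms] by blast
qed

lemma sat_exists:
  assumes "finite E"
  shows "\<exists>M. maximal_matching E M \<and> card M = saturation_number E"
proof -
  have "saturation_number E \<in> card ` {M. maximal_matching E M}" unfolding saturation_number_def
    using sat_fin[OF assms] by (intro Min_in) auto
  thus ?thesis by auto
qed

lemma sat_le:
  assumes "finite E" "maximal_matching E M"
  shows "saturation_number E \<le> card M"
  unfolding saturation_number_def using sat_fin[OF assms(1)] assms(2) by (intro Min_le) auto

lemma sg_edge: "simple_graph V E \<Longrightarrow> e \<in> E \<Longrightarrow> card e = 2 \<and> e \<subseteq> V \<and> e \<noteq> {}"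
  unfolding simple_graph_def by fastforce

lemma sg_finite:
  assumes "simple_graph V E" shows "finite E"
proof -
  have "E \<subseteq> Pow V" using sg_edge[OF assms] by blast
  moreover have "finite V" using assms unfolding simple_graph_def by simp
  ultimately show ?thesis by (meson finite_Pow_iff finite_subset)
qed

lemma card_Union_matching:
  assumes "simple_graph V E" "matching E M"
  shows "card (\<Union>M) = 2 * card M"
proof -
  have "card (\<Union>M) = sum card M"
    apply (rule card_Union_disjoint)
    using assms(2) unfolding matching_def pairwise_def disjnt_def apply blast
    using assms sg_edge unfolding matching_def by (metis card.infinite subsetD zero_neq_numeral)
  also have "\<dots> = sum (\<lambda>_. 2) M"
    using assms sg_edge unfolding matching_def by (intro sum.cong) auto
  finally show ?thesis by simp
qed


definition cp :: "'a \<Rightarrow> 'b set \<Rightarrow> ('a + 'a \<times> 'b) set" where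
  "cp v e = (\<lambda>w. Inr (v, w)) ` e"

lemma mem_corona:
  "g \<in> corona_E V1 E1 V2 E2 \<longleftrightarrow> (\<exists>f\<in>E1. g = Inl ` f) \<or> (\<exists>v\<in>V1. \<exists>f\<in>E2. g = cp v f)
     \<or> (\<exists>v w. v \<in> V1 \<and> w \<in> V2 \<and> g = {Inl v, Inr (v, w)})"
  unfolding corona_E_def cp_def by blast

lemma cp_Int: "cp v e \<inter> cp v f = cp v (e \<inter> f)"
  unfolding cp_def by auto

lemma cp_inj: "cp v e = cp v f \<longleftrightarrow> e = f"
  unfolding cp_def by (rule inj_image_eq_iff) (auto simp: inj_def)

lemma corona_finite:
  assumes "simple_graph V1 E1" "simple_graph V2 E2"
  shows "finite (corona_E V1 E1 V2 E2)"
proof -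
  have f1: "finite V1" "finite V2" using assms unfolding simple_graph_def by auto
  have "{{Inl v, Inr (v, w)} | v w. v \<in> V1 \<and> w \<in> V2} = (\<lambda>(v,w). {Inl v, Inr (v, w)}) ` (V1 \<times> V2)"
    by auto
  thus ?thesis unfolding corona_E_def using f1 sg_finite[OF assms(1)] sg_finite[OF assms(2)] by simp
qed

lemma lower_part:
  assumes g1: "simple_graph V1 E1" and g2: "simple_graph V2 E2"
    and mm: "maximal_matching (corona_E V1 E1 V2 E2) M'" and v: "v \<in> V1"
  shows "saturation_number E2 \<le> card (M' \<inter> (cp v ` E2 \<union> {{Inl v, Inr (v, w)} | w. w \<in> V2}))"
    (is "_ \<le> card ?B")
proof -
  let ?C = "corona_E V1 E1 V2 E2"
  have finC: "finite ?C" using corona_finite[OF g1 g2] .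
  have mM: "matching ?C M'" using mm unfolding maximal_matching_def by blast
  have finM: "finite M'" using mM finC unfolding matching_def by (auto intro: finite_subset)
  have finB: "finite ?B" using finM by simp
  have fin2: "finite E2" using sg_finite[OF g2] .
  define A where "A = {e\<in>E2. cp v e \<in> M'}"
  have cardA: "card (cp v ` A) = card A"
    by (rule card_image) (auto simp: inj_on_def cp_inj)
  have AB: "cp v ` A \<subseteq> ?B" unfolding A_def by auto
  have mA: "matching E2 A" unfolding matching_def
  proof (intro conjI ballI impI)
    show "A \<subseteq> E2" unfolding A_def by blast
    fix e1 e2 assume e: "e1 \<in> A" "e2 \<in> A" "e1 \<noteq> e2"
    hence "cp v e1 \<inter> cp v e2 = {}" using mM unfolding matching_def A_def by (auto simp: cp_inj)
    thus "e1 \<inter> e2 = {}" by (metis cp_Int cp_def image_is_empty)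
  qed
  have key: "(\<exists>f\<in>A. g = cp v f) \<or> (\<exists>w\<in>e'. w \<in> V2 \<and> g = {Inl v, Inr (v, w)})"
    if a1: "e' \<in> E2" and a2: "g \<in> M'" and a3: "cp v e' \<inter> g \<noteq> {}" for e' g
  proof -
    have gC: "g \<in> ?C" using a2 mM unfolding matching_def by blast
    show ?thesis using gC unfolding mem_corona
    proof (elim disjE bexE exE conjE)
      fix f assume "g = Inl ` f" thus ?thesis using a3 unfolding cp_def by auto
    next
      fix v' f assume h: "v' \<in> V1" "f \<in> E2" "g = cp v' f"
      then obtain x where "x \<in> e'" "x \<in> f" "v' = v" using a3 unfolding cp_def by auto
      thus ?thesis using h a2 unfolding A_def by auto
    next
      fix v' w assume h: "v' \<in> V1" "w \<in> V2" "g = {Inl v', Inr (v', w)}"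
      thus ?thesis using a3 unfolding cp_def by auto
    qed
  qed
  show ?thesis
  proof (cases "maximal_matching E2 A")
    case True
    have "saturation_number E2 \<le> card A" using sat_le[OF fin2 True] .
    also have "\<dots> \<le> card ?B" using card_mono[OF finB AB] cardA by simp
    finally show ?thesis .
  next
    case False
    then obtain e where e: "e \<in> E2" "e \<notin> A" "\<forall>f\<in>A. e \<inter> f = {}"
      using block_maximal[OF mA] by blast
    have "cp v e \<in> ?C" using e(1) v unfolding mem_corona by blast
    moreover have "cp v e \<notin> M'" using e unfolding A_def by blast
    ultimately obtain g where g: "g \<in> M'" "cp v e \<inter> g \<noteq> {}" using maximal_block[OF mm] by blast
    from key[OF e(1) g] obtain w0 where w0: "w0 \<in> e" "w0 \<in> V2" "g = {Inl v, Inr (v, w0)}"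
    proof (elim disjE bexE)
      fix f assume "f \<in> A" "g = cp v f"
      hence "e \<inter> f \<noteq> {}" using g(2) by (metis cp_Int cp_def image_empty)
      thus ?thesis using e(3) \<open>f \<in> A\<close> by blast
    qed blast
    have gB: "g \<in> ?B" using g(1) w0 by blast
    have gA: "g \<notin> cp v ` A" using w0(3) unfolding cp_def by auto
    have finA: "finite A" using fin2 unfolding A_def by simp
    have "insert g (cp v ` A) \<subseteq> ?B" using AB gB by blast
    hence "card (insert g (cp v ` A)) \<le> card ?B" by (rule card_mono[OF finB])
    moreover have "card (insert g (cp v ` A)) = card A + 1" using gA cardA finA by simp
    ultimately have cB: "card A + 1 \<le> card ?B" by simp
    have mA': "maximal_matching E2 (insert e A)"
    proof (rule block_maximal)
      show "matching E2 (insert e A)" using mA e unfolding matching_def by (auto simp: Int_commute)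
      fix e' assume e': "e' \<in> E2" "e' \<notin> insert e A"
      show "\<exists>f\<in>insert e A. e' \<inter> f \<noteq> {}"
      proof (rule ccontr)
        assume na: "\<not> ?thesis"
        have "cp v e' \<in> ?C" using e'(1) v unfolding mem_corona by blast
        moreover have "cp v e' \<notin> M'" using e' unfolding A_def by blast
        ultimately obtain h where h: "h \<in> M'" "cp v e' \<inter> h \<noteq> {}" using maximal_block[OF mm] by blast
        from key[OF e'(1) h] show False
        proof (elim disjE bexE conjE)
          fix f assume "f \<in> A" "h = cp v f"
          hence "e' \<inter> f \<noteq> {}" using h(2) by (metis cp_Int cp_def image_empty)
          thus False using na \<open>f \<in> A\<close> by blast
        next
          fix w assume hw: "w \<in> e'" "w \<in> V2" "h = {Inl v, Inr (v, w)}"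
          have "Inl v \<in> h \<inter> g" using hw w0 by simp
          hence "h = g" using mM h(1) g(1) unfolding matching_def by blast
          hence "w = w0" using hw w0 by (auto simp: doubleton_eq_iff)
          thus False using na hw w0 by blast
        qed
      qed
    qed
    have "saturation_number E2 \<le> card (insert e A)" using sat_le[OF fin2 mA'] .
    also have "\<dots> = card A + 1" using finA e(2) by simp
    finally show ?thesis using cB by simp
  qed
qed


lemma hit: "f \<in> M \<Longrightarrow> x \<in> g \<inter> f \<Longrightarrow> \<exists>f\<in>M. g \<inter> f \<noteq> {}"
  by blast

lemma upper_part:
  assumes g1: "simple_graph V1 E1" and g2: "simple_graph V2 E2"
  shows "saturation_number (corona_E V1 E1 V2 E2)
           \<le> card V1 * saturation_number E2 + matching_number E1 + (card V1 - 2 * matching_number E1)"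
proof -
  let ?C = "corona_E V1 E1 V2 E2"
  have fin1: "finite E1" "finite V1" using sg_finite[OF g1] g1 unfolding simple_graph_def by auto
  have fin2: "finite E2" using sg_finite[OF g2] .
  obtain M1 where M1: "matching E1 M1" "card M1 = matching_number E1" "maximal_matching E1 M1"
    using max_matching_exists[OF fin1(1)] by blast
  obtain S where S: "maximal_matching E2 S" "card S = saturation_number E2"
    using sat_exists[OF fin2] by blast
  have mS: "matching E2 S" using S(1) unfolding maximal_matching_def by blast
  define U where "U = V1 - \<Union>M1"
  define w0 where "w0 = (SOME w. w \<in> V2 - \<Union>S)"
  define Y where "Y = (\<Union>v\<in>V1. cp v ` S)"
  define X where "X = (if V2 \<subseteq> \<Union>S then {} else (\<lambda>v. {Inl v, Inr (v, w0)}) ` U)"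
  define IM where "IM = ((\<lambda>e. Inl ` e) ` M1 :: ('a + 'a \<times> 'b) set set)"
  define M where "M = IM \<union> Y \<union> X"
  have w0: "\<not> V2 \<subseteq> \<Union>S \<Longrightarrow> w0 \<in> V2 \<and> w0 \<notin> \<Union>S"
    unfolding w0_def by (metis (no_types, lifting) Diff_iff someI_ex subsetI)
  have M1sub: "\<Union>M1 \<subseteq> V1" using M1(1) sg_edge[OF g1] unfolding matching_def by blast
  have cardU: "card U = card V1 - 2 * matching_number E1"
    unfolding U_def using card_Diff_subset[OF finite_subset[OF M1sub fin1(2)] M1sub]
      card_Union_matching[OF g1 M1(1)] M1(2) by simp
  have MC: "M \<subseteq> ?C"
  proof
    fix g assume "g \<in> M"
    then consider "g \<in> (\<lambda>e. Inl ` e) ` M1" | "g \<in> Y" | "g \<in> X" unfolding M_def IM_def by blast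
    thus "g \<in> ?C"
    proof cases
      case 1
      then obtain f where "f \<in> M1" "g = Inl ` f" by blast
      moreover have "M1 \<subseteq> E1" using M1(1) unfolding matching_def by blast
      ultimately have "\<exists>f\<in>E1. g = Inl ` f" by blast
      thus ?thesis unfolding mem_corona by blast
    next
      case 2
      then obtain v f where "v \<in> V1" "f \<in> S" "g = cp v f" unfolding Y_def by blast
      moreover have "S \<subseteq> E2" using mS unfolding matching_def by blast
      ultimately have "\<exists>v\<in>V1. \<exists>f\<in>E2. g = cp v f" by blast
      thus ?thesis unfolding mem_corona by blast
    next
      case 3
      hence nS: "\<not> V2 \<subseteq> \<Union>S" unfolding X_def by (cases "V2 \<subseteq> \<Union>S") auto
      then obtain u where "u \<in> U" "g = {Inl u, Inr (u, w0)}" using 3 unfolding X_def by auto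
      moreover have "u \<in> V1" using \<open>u \<in> U\<close> unfolding U_def by blast
      ultimately have "\<exists>v w. v \<in> V1 \<and> w \<in> V2 \<and> g = {Inl v, Inr (v, w)}" using w0[OF nS] by blast
      thus ?thesis unfolding mem_corona by blast
    qed
  qed
  have mM: "matching ?C M" unfolding matching_def
  proof (intro conjI MC ballI impI)
    fix e1 e2 assume e: "e1 \<in> M" "e2 \<in> M" "e1 \<noteq> e2"
    have dM1: "\<And>a b. a \<in> M1 \<Longrightarrow> b \<in> M1 \<Longrightarrow> a \<noteq> b \<Longrightarrow> a \<inter> b = {}"
      using M1(1) unfolding matching_def by blast
    have dS: "\<And>a b. a \<in> S \<Longrightarrow> b \<in> S \<Longrightarrow> a \<noteq> b \<Longrightarrow> a \<inter> b = {}"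
      using mS unfolding matching_def by blast
    have Xf: "\<And>g. g \<in> X \<Longrightarrow> \<exists>v\<in>U. g = {Inl v, Inr (v, w0)} \<and> w0 \<notin> \<Union>S"
      unfolding X_def using w0 by (auto split: if_splits)
    have cls: "\<And>g. g \<in> M \<Longrightarrow> (\<exists>a\<in>M1. g = Inl ` a) \<or> (\<exists>v a. a \<in> S \<and> g = cp v a)
         \<or> (\<exists>u\<in>U. g = {Inl u, Inr (u, w0)} \<and> w0 \<notin> \<Union>S)"
      unfolding M_def IM_def Y_def using Xf by blast
    have c1: "Inl ` a \<inter> cp v b = {}" for a b v by (auto simp: cp_def)
    have c2: "Inl ` a \<inter> {Inl u, Inr (u, w0)} = {}" if "a \<in> M1" "u \<in> U" for a u
      using that unfolding U_def by auto
    have c3: "cp v a \<inter> {Inl u, Inr (u, w0)} = {}" if "a \<in> S" "w0 \<notin> \<Union>S" for a u v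
      using that unfolding cp_def by auto
    have c4: "Inl ` a \<inter> Inl ` b = {}" if "a \<in> M1" "b \<in> M1" "Inl ` a \<noteq> Inl ` b" for a b
      using that dM1 by (metis image_Int image_empty inj_Inl)
    have c5: "cp v a \<inter> cp v' b = {}" if "a \<in> S" "b \<in> S" "cp v a \<noteq> cp v' b" for a b v v'
    proof (cases "v = v'")
      case True
      hence "a \<noteq> b" using that(3) by auto
      hence "a \<inter> b = {}" using dS that(1,2) by blast
      thus ?thesis using True cp_Int by (metis cp_def image_empty)
    next
      case False thus ?thesis unfolding cp_def by auto
    qed
    have c6: "{Inl u, Inr (u, w0)} \<inter> {Inl u', Inr (u', w0)} = {}" if "{Inl u, Inr (u, w0)} \<noteq> {Inl u', Inr (u', w0)}" for u u'
      using that by auto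
    from cls[OF e(1)] cls[OF e(2)] show "e1 \<inter> e2 = {}"
      apply (elim disjE bexE exE conjE)
      using c1 c2 c3 c4 c5 c6 e(3) by (simp_all add: Int_commute)
  qed
  have finX: "finite X" unfolding X_def U_def using fin1 by auto
  have finY: "finite Y" unfolding Y_def using fin1 fin2 mS unfolding matching_def
    by (auto intro: finite_subset)
  have mmM: "maximal_matching ?C M"
  proof (rule block_maximal[OF mM])
    fix g assume gC: "g \<in> ?C" and gM: "g \<notin> M"
    from gC[unfolded mem_corona] show "\<exists>f\<in>M. g \<inter> f \<noteq> {}"
    proof (elim disjE bexE exE conjE)
      fix f assume f: "f \<in> E1" "g = Inl ` f"
      hence "f \<notin> M1" using gM unfolding M_def IM_def by blast
      then obtain h where "h \<in> M1" "f \<inter> h \<noteq> {}" using maximal_block[OF M1(3) f(1)] by blast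
      then obtain x where x: "h \<in> M1" "x \<in> f" "x \<in> h" by blast
      have "Inl ` h \<in> IM" unfolding IM_def using x(1) by blast
      hence "Inl ` h \<in> M" unfolding M_def by (rule UnI1[OF UnI1])
      moreover have "Inl x \<in> g \<inter> Inl ` h" using f(2) x by simp
      ultimately show ?thesis by (rule hit)
    next
      fix v f assume f: "v \<in> V1" "f \<in> E2" "g = cp v f"
      hence "f \<notin> S" using gM unfolding M_def IM_def Y_def by blast
      then obtain h where "h \<in> S" "f \<inter> h \<noteq> {}" using maximal_block[OF S(1) f(2)] by blast
      then obtain x where x: "h \<in> S" "x \<in> f" "x \<in> h" by blast
      have "cp v h \<in> Y" unfolding Y_def using x(1) f(1) by blast
      hence "cp v h \<in> M" unfolding M_def by (rule UnI1[OF UnI2])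
      moreover have "Inr (v, x) \<in> g \<inter> cp v h" using f(3) x by (simp add: cp_def)
      ultimately show ?thesis by (rule hit)
    next
      fix v w assume h: "v \<in> V1" "w \<in> V2" "g = {Inl v, Inr (v, w)}"
      show ?thesis
      proof (cases "w \<in> \<Union>S")
        case True
        then obtain f where "f \<in> S" "w \<in> f" by blast
        hence "cp v f \<in> Y" unfolding Y_def using h(1) by blast
        hence "cp v f \<in> M" unfolding M_def by (rule UnI1[OF UnI2])
        moreover have "Inr (v, w) \<in> g \<inter> cp v f" using h(3) \<open>w \<in> f\<close> by (simp add: cp_def)
        ultimately show ?thesis by (rule hit)
      next
        case False
        hence nS: "\<not> V2 \<subseteq> \<Union>S" using h(2) by blast
        show ?thesis
        proof (cases "v \<in> \<Union>M1")
          case True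
          then obtain f where "f \<in> M1" "v \<in> f" by blast
          hence "Inl ` f \<in> IM" unfolding IM_def by blast
          hence "Inl ` f \<in> M" unfolding M_def by (rule UnI1[OF UnI1])
          moreover have "Inl v \<in> g \<inter> Inl ` f" using h(3) \<open>v \<in> f\<close> by simp
          ultimately show ?thesis by (rule hit)
        next
          case False
          hence "v \<in> U" unfolding U_def using h(1) by blast
          have Xeq: "X = (\<lambda>v. {Inl v, Inr (v, w0)}) ` U" unfolding X_def using nS by simp
          have "{Inl v, Inr (v, w0)} \<in> X" unfolding Xeq using \<open>v \<in> U\<close> by (rule imageI)
          hence "{Inl v, Inr (v, w0)} \<in> M" unfolding M_def by (rule UnI2)
          moreover have "Inl v \<in> g \<inter> {Inl v, Inr (v, w0)}" using h by simp
          ultimately show ?thesis by (rule hit)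
        qed
      qed
    qed
  qed
  have a1: "saturation_number ?C \<le> card M" using sat_le[OF corona_finite[OF g1 g2] mmM] .
  have a2: "card M \<le> card IM + card Y + card X"
    unfolding M_def by (rule order_trans[OF card_Un_le add_right_mono[OF card_Un_le]])
  have finM1: "finite M1" using M1(1) fin1(1) unfolding matching_def by (auto intro: finite_subset)
  have "card IM \<le> card M1" unfolding IM_def by (rule card_image_le[OF finM1])
  hence a3: "card IM \<le> matching_number E1" using M1(2) by simp
  have a4: "card Y \<le> (\<Sum>v\<in>V1. card (cp v ` S))" unfolding Y_def by (rule card_UN_le[OF fin1(2)])
  have finS: "finite S" using fin2 mS unfolding matching_def by (auto intro: finite_subset)
  have a5: "(\<Sum>v\<in>V1. card (cp v ` S)) \<le> (\<Sum>v\<in>V1. card S)"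
    by (intro sum_mono card_image_le finS)
  have a6: "(\<Sum>v\<in>V1. card S) = card V1 * saturation_number E2" using S(2) by simp
  have a7: "card X \<le> card U" unfolding X_def using card_image_le[of U] fin1(2) U_def by auto
  show ?thesis using a1 a2 a3 a4 a5 a6 a7 cardU by linarith
qed

theorem corollary2p9:
  fixes V1 :: "'a set" and E1 :: "'a set set" and V2 :: "'b set" and E2 :: "'b set set"
    and n l :: nat
  assumes "simple_graph V1 E1" and "simple_graph V2 E2"
    and "n = card V1"
    and "l = n - 2 * matching_number E1"
  shows "n * saturation_number E2 \<le> saturation_number (corona_E V1 E1 V2 E2)
       \<and> saturation_number (corona_E V1 E1 V2 E2)
           \<le> n * saturation_number E2 + matching_number E1 + l"
proof
  show "saturation_number (corona_E V1 E1 V2 E2)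
           \<le> n * saturation_number E2 + matching_number E1 + l"
    using upper_part[OF assms(1,2)] assms(3,4) by simp
  let ?C = "corona_E V1 E1 V2 E2"
  obtain M' where M': "maximal_matching ?C M'" "card M' = saturation_number ?C"
    using sat_exists[OF corona_finite[OF assms(1,2)]] by blast
  define B where "B = (\<lambda>v. M' \<inter> (cp v ` E2 \<union> {{Inl v, Inr (v, w)} | w. w \<in> V2}))"
  have fin1: "finite V1" using assms(1) unfolding simple_graph_def by auto
  have finM: "finite M'" using M'(1) corona_finite[OF assms(1,2)]
    unfolding maximal_matching_def matching_def by (auto intro: finite_subset)
  have ne: "\<And>f. f \<in> E2 \<Longrightarrow> f \<noteq> {}" using sg_edge[OF assms(2)] by blast
  have disj: "\<forall>i\<in>V1. \<forall>j\<in>V1. i \<noteq> j \<longrightarrow> B i \<inter> B j = {}"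
  proof (intro ballI impI)
    fix i j assume ij: "i \<in> V1" "j \<in> V1" "i \<noteq> j"
    show "B i \<inter> B j = {}"
    proof (rule ccontr)
      assume "B i \<inter> B j \<noteq> {}"
      then obtain g where "g \<in> B i" "g \<in> B j" by blast
      hence gx: "(\<exists>x\<in>E2. g = cp i x) \<or> (\<exists>w. g = {Inl i, Inr (i, w)})"
        "(\<exists>x\<in>E2. g = cp j x) \<or> (\<exists>w. g = {Inl j, Inr (j, w)})"
        unfolding B_def by blast+
      show False
      proof (cases "\<exists>x\<in>E2. g = cp i x")
        case True
        then obtain x where x: "x \<in> E2" "g = cp i x" by blast
        hence "Inl j \<notin> g" unfolding cp_def by auto
        then obtain y where gy: "g = cp j y" using gx(2) by auto
        have "x \<noteq> {}" using x ne by auto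
        then obtain z where "z \<in> x" by blast
        hence "Inr (i, z) \<in> g" using x unfolding cp_def by auto
        thus False using gy ij(3) unfolding cp_def by auto
      next
        case False
        then obtain w where gi: "g = {Inl i, Inr (i, w)}" using gx(1) by auto
        hence "Inl i \<in> g" by simp
        moreover have "\<forall>x. Inl i \<notin> cp j x" unfolding cp_def by auto
        ultimately obtain w' where "g = {Inl j, Inr (j, w')}" using gx(2) by auto
        thus False using ij(3) \<open>Inl i \<in> g\<close> by simp
      qed
    qed
  qed
  have "n * saturation_number E2 = (\<Sum>v\<in>V1. saturation_number E2)" using assms(3) by simp
  also have "\<dots> \<le> (\<Sum>v\<in>V1. card (B v))"
    unfolding B_def by (intro sum_mono lower_part[OF assms(1,2) M'(1)])
  also have "\<dots> = card (\<Union>(B ` V1))"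
    using card_UN_disjoint[OF fin1 _ disj] finM unfolding B_def by simp
  also have "\<dots> \<le> card M'" using finM unfolding B_def by (intro card_mono) auto
  finally show "n * saturation_number E2 \<le> saturation_number ?C" using M'(2) by simp
qed

end
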